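(* Let $m\ge 2$ and let $Q_2$ be a bivariate quasi-copula. Then $Q^*(u):=Q_2(\min_{2\le i\le m}u_i,\,u_1)$, $u=(u_1,\dots,u_m)\in[0,1]^m$, is an $m$-variate quasi-copula, and its survival function satisfies $$\widehat{Q^*}(u_1,\dots,u_m)=\widehat{Q_2}\big(\max_{2\le i\le m}u_i,\,u_1\big)\quad\text{for all }(u_1,\dots,u_m)\in[0,1]^m.$$
   Context: An $m$-variate quasi-copula is $Q:[0,1]^m\to[0,1]$ that is grounded ($Q(u)=0$ whenever some $u_i=0$), has uniform marginals ($Q(1,\dots,1,u_i,1,\dots,1)=u_i$), is nondecreasing in each argument, and satisfies $|Q(v)-Q(u)|\le\sum_i|v_i-u_i|$. The survival function of an $m$-variate quasi-copula $Q$ is $\widehat{Q}(u)=\sum_{J\subseteq\{1,\dots,m\}}(-1)^{m-|J|}Q(y^J)$, where $y^J_i=1$ if $i\in J$ and $y^J_i=u_i$ otherwise (so for $m=2$, $\widehat{Q}(u_1,u_2)=1-u_1-u_2+Q(u_1,u_2)$). *)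

theory Defs
  imports "HOL-Library.FuncSet" Complex_Main
begin

text \<open>Points of [0,1]^m are represented extensionally as functions on the
index set {1..m} (value undefined outside).\<close>

definition cube :: "nat \<Rightarrow> (nat \<Rightarrow> real) set" where
  "cube m = PiE {1..m} (\<lambda>_. {0..1})"

definition quasi_copula :: "nat \<Rightarrow> ((nat \<Rightarrow> real) \<Rightarrow> real) \<Rightarrow> bool" where
  "quasi_copula m Q \<longleftrightarrow>
     (\<forall>u\<in>cube m. Q u \<in> {0..1}) \<and>
     (\<forall>u\<in>cube m. (\<exists>i\<in>{1..m}. u i = 0) \<longrightarrow> Q u = 0) \<and>
     (\<forall>u\<in>cube m. \<forall>i\<in>{1..m}. (\<forall>j\<in>{1..m} - {i}. u j = 1) \<longrightarrow> Q u = u i) \<and>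
     (\<forall>u\<in>cube m. \<forall>v\<in>cube m. \<forall>i\<in>{1..m}.
        (\<forall>j\<in>{1..m} - {i}. u j = v j) \<and> u i \<le> v i \<longrightarrow> Q u \<le> Q v) \<and>
     (\<forall>u\<in>cube m. \<forall>v\<in>cube m. \<bar>Q v - Q u\<bar> \<le> (\<Sum>i\<in>{1..m}. \<bar>v i - u i\<bar>))"

definition yJ :: "nat \<Rightarrow> nat set \<Rightarrow> (nat \<Rightarrow> real) \<Rightarrow> (nat \<Rightarrow> real)" where
  "yJ m J u = restrict (\<lambda>i. if i \<in> J then 1 else u i) {1..m}"

definition survival :: "nat \<Rightarrow> ((nat \<Rightarrow> real) \<Rightarrow> real) \<Rightarrow> (nat \<Rightarrow> real) \<Rightarrow> real" where
  "survival m Q u = (\<Sum>J\<in>Pow {1..m}. (-1) ^ (m - card J) * Q (yJ m J u))"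

definition pt2 :: "real \<Rightarrow> real \<Rightarrow> (nat \<Rightarrow> real)" where
  "pt2 a b = restrict (\<lambda>i. if i = 1 then a else b) {1..2}"

end

theory Submission
  imports Defs
begin

lemma pt2_cube: "a \<in> {0..1} \<Longrightarrow> b \<in> {0..1} \<Longrightarrow> pt2 a b \<in> cube 2"
  unfolding pt2_def cube_def by (auto simp: PiE_iff)

lemma pt2_1[simp]: "pt2 a b 1 = a" and pt2_2[simp]: "pt2 a b 2 = b"
  unfolding pt2_def by auto

lemma pt2_eval: "pt2 a b j = (if j = 1 then a else if j = 2 then b else undefined)"
  unfolding pt2_def by auto

lemma two_set: "{1..2::nat} = {1,2}" by auto

lemma yJ_pt2: "yJ 2 J (pt2 a b) = pt2 (if 1\<in>J then 1 else a) (if 2\<in>J then 1 else b)"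
  unfolding fun_eq_iff
proof
  fix x show "yJ 2 J (pt2 a b) x = pt2 (if 1\<in>J then 1 else a) (if 2\<in>J then 1 else b) x"
    by (cases "x = 1"; cases "x = 2") (auto simp: yJ_def pt2_eval)
qed

lemma qcD1: "quasi_copula m Q \<Longrightarrow> u \<in> cube m \<Longrightarrow> Q u \<in> {0..1}"
  unfolding quasi_copula_def by (drule conjunct1) (erule bspec)
lemma qcD2: "quasi_copula m Q \<Longrightarrow> u \<in> cube m \<Longrightarrow> i \<in> {1..m} \<Longrightarrow> u i = 0 \<Longrightarrow> Q u = 0"
  unfolding quasi_copula_def
  apply (drule conjunct2, drule conjunct1)
  apply (drule bspec, assumption)
  apply (erule mp)
  apply (erule bexI[rotated])
  apply assumption
  done
lemma qcD3: "quasi_copula m Q \<Longrightarrow> u \<in> cube m \<Longrightarrow> i \<in> {1..m} \<Longrightarrow> (\<And>j. j \<in> {1..m} \<Longrightarrow> j \<noteq> i \<Longrightarrow> u j = 1) \<Longrightarrow> Q u = u i"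
  unfolding quasi_copula_def
  apply (drule conjunct2, drule conjunct2, drule conjunct1)
  apply (drule bspec, assumption)
  apply (drule bspec, assumption)
  apply (erule mp)
  apply simp
  done
lemma qcD4: "quasi_copula m Q \<Longrightarrow> u \<in> cube m \<Longrightarrow> v \<in> cube m \<Longrightarrow> i \<in> {1..m} \<Longrightarrow>
   (\<And>j. j \<in> {1..m} \<Longrightarrow> j \<noteq> i \<Longrightarrow> u j = v j) \<Longrightarrow> u i \<le> v i \<Longrightarrow> Q u \<le> Q v"
  unfolding quasi_copula_def
  apply (drule conjunct2, drule conjunct2, drule conjunct2, drule conjunct1)
  apply (drule bspec[where x=u], assumption)
  apply (drule bspec[where x=v], assumption)
  apply (drule bspec[where x=i], assumption)
  apply (erule mp)
  apply simp
  done
lemma qcD5: "quasi_copula m Q \<Longrightarrow> u \<in> cube m \<Longrightarrow> v \<in> cube m \<Longrightarrow> \<bar>Q v - Q u\<bar> \<le> (\<Sum>i\<in>{1..m}. \<bar>v i - u i\<bar>)"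
  unfolding quasi_copula_def
  apply (drule conjunct2, drule conjunct2, drule conjunct2, drule conjunct2)
  apply (drule bspec[where x=u], assumption)
  apply (drule bspec[where x=v], assumption)
  apply assumption
  done

lemma Q2_range: assumes "quasi_copula 2 Q" "a \<in> {0..1}" "b \<in> {0..1}"
  shows "Q (pt2 a b) \<in> {0..1}"
  using qcD1[OF assms(1) pt2_cube[OF assms(2,3)]] .

lemma Q2_marg1: assumes "quasi_copula 2 Q" "a \<in> {0..1}"
  shows "Q (pt2 a 1) = a"
proof -
  have c: "pt2 a 1 \<in> cube 2" using assms pt2_cube by auto
  have "Q (pt2 a 1) = pt2 a 1 1"
    by (rule qcD3[OF assms(1) c]) (auto simp: pt2_eval)
  then show ?thesis by (simp add: pt2_eval)
qed

lemma Q2_marg2: assumes "quasi_copula 2 Q" "b \<in> {0..1}"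
  shows "Q (pt2 1 b) = b"
proof -
  have c: "pt2 1 b \<in> cube 2" using assms pt2_cube by auto
  have "Q (pt2 1 b) = pt2 1 b 2"
    by (rule qcD3[OF assms(1) c]) (auto simp: pt2_eval)
  then show ?thesis by (simp add: pt2_eval)
qed

lemma Q2_ground: assumes "quasi_copula 2 Q" "a \<in> {0..1}" "b \<in> {0..1}" "a = 0 \<or> b = 0"
  shows "Q (pt2 a b) = 0"
proof -
  have c: "pt2 a b \<in> cube 2" using assms pt2_cube by auto
  show ?thesis
  proof (cases "a = 0")
    case True then show ?thesis by (intro qcD2[OF assms(1) c, of 1]) (auto simp: pt2_eval)
  next
    case False then have "b = 0" using assms(4) by simp
    then show ?thesis by (intro qcD2[OF assms(1) c, of 2]) (auto simp: pt2_eval)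
  qed
qed

lemma Q2_mono: assumes "quasi_copula 2 Q" "a \<in> {0..1}" "b \<in> {0..1}" "a' \<in> {0..1}" "b' \<in> {0..1}"
  "a \<le> a'" "b \<le> b'"
  shows "Q (pt2 a b) \<le> Q (pt2 a' b')"
proof -
  have "Q (pt2 a b) \<le> Q (pt2 a' b)"
    by (rule qcD4[OF assms(1) pt2_cube pt2_cube, of _ _ _ _ 1]) (use assms in \<open>auto simp: pt2_eval\<close>)
  also have "\<dots> \<le> Q (pt2 a' b')"
    by (rule qcD4[OF assms(1) pt2_cube pt2_cube, of _ _ _ _ 2]) (use assms in \<open>auto simp: pt2_eval\<close>)
  finally show ?thesis .
qed

lemma Q2_lip: assumes "quasi_copula 2 Q" "a \<in> {0..1}" "b \<in> {0..1}" "a' \<in> {0..1}" "b' \<in> {0..1}"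
  shows "\<bar>Q (pt2 a' b') - Q (pt2 a b)\<bar> \<le> \<bar>a' - a\<bar> + \<bar>b' - b\<bar>"
proof -
  have "\<bar>Q (pt2 a' b') - Q (pt2 a b)\<bar> \<le> (\<Sum>i\<in>{1..2}. \<bar>pt2 a' b' i - pt2 a b i\<bar>)"
    by (rule qcD5[OF assms(1) pt2_cube[OF assms(2,3)] pt2_cube[OF assms(4,5)]])
  also have "(\<Sum>i\<in>{1..2::nat}. \<bar>pt2 a' b' i - pt2 a b i\<bar>) = \<bar>a' - a\<bar> + \<bar>b' - b\<bar>"
    unfolding two_set by (simp add: pt2_eval)
  finally show ?thesis .
qed

lemma comb:
  fixes g :: "real \<Rightarrow> real" and u :: "nat \<Rightarrow> real"
  assumes "finite S" "\<forall>i\<in>S. u i \<le> c"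
  shows "(\<Sum>T\<in>Pow S. (-1) ^ card T * g (Min (insert c (u ` T)))) =
         (if S = {} then g c else g c - g (Max (u ` S)))"
  using assms
proof (induction S arbitrary: u c rule: finite_induct)
  case empty then show ?case by simp
next
  case (insert a S)
  define u' where "u' = (\<lambda>i. min (u a) (u i))"
  have ua: "u a \<le> c" using insert.prems by auto
  have IH1: "(\<Sum>T\<in>Pow S. (-1) ^ card T * g (Min (insert c (u ` T)))) = (if S = {} then g c else g c - g (Max (u ` S)))"
    using insert.IH insert.prems by auto
  have IH2: "(\<Sum>T\<in>Pow S. (-1) ^ card T * g (Min (insert (u a) (u' ` T)))) = (if S = {} then g (u a) else g (u a) - g (Max (u' ` S)))"
    using insert.IH[of u' "u a"] by (auto simp: u'_def)
  have e1: "Min (insert (u a) (u' ` T)) = Min (insert c (u ` (insert a T)))" if "T \<subseteq> S" for T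
  proof -
    have fT: "finite T" using that insert.hyps(1) finite_subset by blast
    show ?thesis
    proof (cases "T = {}")
      case True then show ?thesis using ua by (simp add: min_def)
    next
      case False
      have "min (u a) (Min (u ` T)) = Min (min (u a) ` (u ` T))"
        by (rule mono_Min_commute) (auto simp: mono_def fT False)
      then have "Min (u' ` T) = min (u a) (Min (u ` T))"
        by (simp add: u'_def image_image)
      moreover have "Min (insert c (u ` (insert a T))) = min c (min (u a) (Min (u ` T)))"
        using fT False by simp
      moreover have "Min (insert (u a) (u' ` T)) = min (u a) (Min (u' ` T))"
        using fT False by simp
      ultimately show ?thesis using ua by (simp add: min_def)
    qed
  qed
  have dis: "Pow S \<inter> insert a ` Pow S = {}" using insert.hyps(2) by auto
  have inj: "inj_on (insert a) (Pow S)"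
  proof (rule inj_onI)
    fix x y assume xy: "x \<in> Pow S" "y \<in> Pow S" "insert a x = insert a y"
    then have "insert a x - {a} = insert a y - {a}" by simp
    then show "x = y" using xy insert.hyps(2) by auto
  qed
  have "(\<Sum>T\<in>Pow (insert a S). (-1) ^ card T * g (Min (insert c (u ` T))))
      = (\<Sum>T\<in>Pow S. (-1) ^ card T * g (Min (insert c (u ` T))))
        + (\<Sum>T\<in>insert a ` Pow S. (-1) ^ card T * g (Min (insert c (u ` T))))"
    unfolding Pow_insert using dis insert.hyps(1) by (simp add: sum.union_disjoint)
  also have "(\<Sum>T\<in>insert a ` Pow S. (-1) ^ card T * g (Min (insert c (u ` T))))
     = (\<Sum>T\<in>Pow S. (-1) ^ card (insert a T) * g (Min (insert c (u ` (insert a T)))))"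
    using inj by (simp add: sum.reindex)
  also have "\<dots> = - (\<Sum>T\<in>Pow S. (-1) ^ card T * g (Min (insert (u a) (u' ` T))))"
    unfolding sum_negf[symmetric]
  proof (rule sum.cong)
    fix T assume T: "T \<in> Pow S"
    have fT: "finite T" using T insert.hyps(1) finite_subset by blast
    have "a \<notin> T" using T insert.hyps(2) by auto
    then show "(-1) ^ card (insert a T) * g (Min (insert c (u ` (insert a T))))
       = - ((-1) ^ card T * g (Min (insert (u a) (u' ` T))))"
      using fT e1[of T] T by simp
  qed simp
  finally have eq: "(\<Sum>T\<in>Pow (insert a S). (-1) ^ card T * g (Min (insert c (u ` T))))
     = (if S = {} then g c else g c - g (Max (u ` S))) - (if S = {} then g (u a) else g (u a) - g (Max (u' ` S)))"
    using IH1 IH2 by simp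
  show ?case
  proof (cases "S = {}")
    case True then show ?thesis using eq by simp
  next
    case False
    have "min (u a) (Max (u ` S)) = Max (min (u a) ` (u ` S))"
      by (rule mono_Max_commute) (auto simp: mono_def insert.hyps(1) False)
    then have mx: "Max (u' ` S) = min (u a) (Max (u ` S))"
      by (simp add: u'_def image_image)
    have mx2: "Max (u ` insert a S) = max (u a) (Max (u ` S))"
      using insert.hyps(1) False by simp
    show ?thesis using eq mx mx2 False
      by (cases "u a \<le> Max (u ` S)") (auto simp: min_def max_def)
  qed
qed

lemma surv2: "survival 2 Q (pt2 a b) = Q (pt2 a b) - Q (pt2 1 b) - Q (pt2 a 1) + Q (pt2 1 1)"
proof -
  have P: "Pow {1..2::nat} = {{}, {1}, {2}, {1,2}}" unfolding two_set Pow_insert by auto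
  show ?thesis unfolding survival_def P by (simp add: yJ_pt2)
qed

lemma qc_main:
  fixes m :: nat and Q2 :: "(nat \<Rightarrow> real) \<Rightarrow> real"
  assumes "m \<ge> 2" and "quasi_copula 2 Q2"
  shows "quasi_copula m (\<lambda>u. Q2 (pt2 (Min (u ` {2..m})) (u 1)))"
proof -
  define S where "S = {2..m}"
  define Qs where "Qs = (\<lambda>u. Q2 (pt2 (Min (u ` {2..m})) (u 1)))"
  have QsS: "Qs u = Q2 (pt2 (Min (u ` S)) (u 1))" for u by (simp add: Qs_def S_def)
  have fS: "finite S" by (simp add: S_def)
  have neS: "S \<noteq> {}" using assms(1) by (simp add: S_def)
  have q: "quasi_copula 2 Q2" by (rule assms(2))
  have S1: "{1..m} = insert 1 S" using assms(1) by (auto simp: S_def)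
  have n1S: "1 \<notin> S" by (simp add: S_def)
  have SS: "S \<subseteq> {1..m}" by (auto simp: S_def)
  have cubeD: "u i \<in> {0..1}" if "u \<in> cube m" "i \<in> {1..m}" for u i
    using that by (auto simp: cube_def PiE_iff)
  have MinS: "Min (u ` S) \<in> {0..1}" if "u \<in> cube m" for u
  proof -
    have "Min (u ` S) \<in> u ` S" using fS neS by simp
    then show ?thesis using cubeD[OF that] SS by auto
  qed
  have u1: "u 1 \<in> {0..1}" if "u \<in> cube m" for u using cubeD[OF that] assms(1) by auto
  have Minle: "Min (u ` S) \<le> u i" if "i \<in> S" for u :: "nat \<Rightarrow> real" and i using fS that by simp
  have Mindiff: "Min (v ` S) \<le> Min (u ` S) + (\<Sum>i\<in>S. \<bar>v i - u i\<bar>)" for u v :: "nat \<Rightarrow> real"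
  proof -
    have "Min (u ` S) \<in> u ` S" using fS neS by simp
    then obtain j where j: "j \<in> S" "u j = Min (u ` S)" by auto
    have "Min (v ` S) \<le> v j" using Minle j by simp
    moreover have "\<bar>v j - u j\<bar> \<le> (\<Sum>i\<in>S. \<bar>v i - u i\<bar>)"
      using member_le_sum[of j S "\<lambda>i. \<bar>v i - u i\<bar>"] j fS by auto
    ultimately show ?thesis using j by linarith
  qed
  have P1: "\<forall>u\<in>cube m. Qs u \<in> {0..1}"
    using Q2_range[OF q] MinS u1 QsS by auto
  have P2: "\<forall>u\<in>cube m. (\<exists>i\<in>{1..m}. u i = 0) \<longrightarrow> Qs u = 0"
  proof (intro ballI impI)
    fix u assume u: "u \<in> cube m" and "\<exists>i\<in>{1..m}. u i = 0"
    then obtain i where i: "i \<in> {1..m}" "u i = 0" by auto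
    have "Min (u ` S) = 0 \<or> u 1 = 0"
    proof (cases "i = 1")
      case True then show ?thesis using i by simp
    next
      case False
      then have "i \<in> S" using i(1) by (simp add: S_def)
      then have "Min (u ` S) \<le> 0" using Minle[OF \<open>i \<in> S\<close>, of u] i(2) by simp
      then show ?thesis using MinS[OF u] by auto
    qed
    then show "Qs u = 0" using Q2_ground[OF q MinS[OF u] u1[OF u]] QsS by simp
  qed
  have P3: "\<forall>u\<in>cube m. \<forall>i\<in>{1..m}. (\<forall>j\<in>{1..m} - {i}. u j = 1) \<longrightarrow> Qs u = u i"
  proof (intro ballI impI)
    fix u i assume u: "u \<in> cube m" and i: "i \<in> {1..m}" and one: "\<forall>j\<in>{1..m} - {i}. u j = 1"
    show "Qs u = u i"
    proof (cases "i = 1")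
      case True
      have "\<forall>j\<in>S. u j = 1"
      proof
        fix j assume j: "j \<in> S"
        then have "j \<in> {1..m} - {i}" using SS n1S True by auto
        then show "u j = 1" using one by blast
      qed
      then have "u ` S = {1}" using neS by auto
      then show ?thesis using Q2_marg2[OF q u1[OF u]] QsS True by simp
    next
      case False
      then have iS: "i \<in> S" using i by (simp add: S_def)
      have "u 1 = 1" using one False assms(1) by auto
      moreover have "Min (u ` S) = u i"
      proof (rule antisym)
        show "Min (u ` S) \<le> u i" using Minle iS by simp
        have "\<forall>j\<in>S. u i \<le> u j"
        proof
          fix j assume j: "j \<in> S"
          show "u i \<le> u j"
          proof (cases "j = i")
            case False
            then have "u j = 1" using one j SS by blast
            then show ?thesis using cubeD[OF u i] by simp
          qed simp
        qed
        then show "u i \<le> Min (u ` S)" using fS neS by (simp add: Min_ge_iff)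
      qed
      ultimately show ?thesis using Q2_marg1[OF q cubeD[OF u i]] QsS by simp
    qed
  qed
  have P4: "\<forall>u\<in>cube m. \<forall>v\<in>cube m. \<forall>i\<in>{1..m}.
        (\<forall>j\<in>{1..m} - {i}. u j = v j) \<and> u i \<le> v i \<longrightarrow> Qs u \<le> Qs v"
  proof (intro ballI impI)
    fix u v i assume u: "u \<in> cube m" and v: "v \<in> cube m" and i: "i \<in> {1..m}"
      and h: "(\<forall>j\<in>{1..m} - {i}. u j = v j) \<and> u i \<le> v i"
    have le: "u j \<le> v j" if "j \<in> {1..m}" for j using h that by (cases "j = i") auto
    have "\<forall>j\<in>S. Min (u ` S) \<le> v j"
    proof
      fix j assume j: "j \<in> S"
      have "Min (u ` S) \<le> u j" using Minle[OF j] .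
      also have "u j \<le> v j" using le j SS by blast
      finally show "Min (u ` S) \<le> v j" .
    qed
    then have "Min (u ` S) \<le> Min (v ` S)"
      using fS neS by (simp add: Min_ge_iff)
    then show "Qs u \<le> Qs v"
      using Q2_mono[OF q MinS[OF u] u1[OF u] MinS[OF v] u1[OF v]] le[of 1] assms(1) QsS by simp
  qed
  have P5: "\<forall>u\<in>cube m. \<forall>v\<in>cube m. \<bar>Qs v - Qs u\<bar> \<le> (\<Sum>i\<in>{1..m}. \<bar>v i - u i\<bar>)"
  proof (intro ballI)
    fix u v assume u: "u \<in> cube m" and v: "v \<in> cube m"
    have "\<bar>Qs v - Qs u\<bar> \<le> \<bar>Min (v ` S) - Min (u ` S)\<bar> + \<bar>v 1 - u 1\<bar>"
      using Q2_lip[OF q MinS[OF u] u1[OF u] MinS[OF v] u1[OF v]] QsS by simp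
    moreover have "\<bar>Min (v ` S) - Min (u ` S)\<bar> \<le> (\<Sum>i\<in>S. \<bar>v i - u i\<bar>)"
      using Mindiff[of v u] Mindiff[of u v] by (simp add: abs_minus_commute)
    moreover have "(\<Sum>i\<in>{1..m}. \<bar>v i - u i\<bar>) = \<bar>v 1 - u 1\<bar> + (\<Sum>i\<in>S. \<bar>v i - u i\<bar>)"
      unfolding S1 using fS n1S by simp
    ultimately show "\<bar>Qs v - Qs u\<bar> \<le> (\<Sum>i\<in>{1..m}. \<bar>v i - u i\<bar>)" by linarith
  qed
  have QC: "quasi_copula m Qs"
    unfolding quasi_copula_def by (rule conjI[OF P1 conjI[OF P2 conjI[OF P3 conjI[OF P4 P5]]]])
  show ?thesis using QC by (simp only: Qs_def)
qed

lemma surv_main: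
  fixes m :: nat and Q2 :: "(nat \<Rightarrow> real) \<Rightarrow> real" and u :: "nat \<Rightarrow> real"
  assumes "m \<ge> 2" and u: "u \<in> cube m"
  shows "survival m (\<lambda>u. Q2 (pt2 (Min (u ` {2..m})) (u 1))) u
                       = survival 2 Q2 (pt2 (Max (u ` {2..m})) (u 1))"
proof -
  define S where "S = {2..m}"
  define Qs where "Qs = (\<lambda>u. Q2 (pt2 (Min (u ` {2..m})) (u 1)))"
  have QsS: "Qs u = Q2 (pt2 (Min (u ` S)) (u 1))" for u by (simp add: Qs_def S_def)
  have fS: "finite S" by (simp add: S_def)
  have neS: "S \<noteq> {}" using assms(1) by (simp add: S_def)
  have S1: "{1..m} = insert 1 S" using assms(1) by (auto simp: S_def)
  have n1S: "1 \<notin> S" by (simp add: S_def)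
  have SS: "S \<subseteq> {1..m}" by (auto simp: S_def)
  have cubeD: "u i \<in> {0..1}" if "u \<in> cube m" "i \<in> {1..m}" for u i
    using that by (auto simp: cube_def PiE_iff)
  have MinS: "Min (u ` S) \<in> {0..1}" if "u \<in> cube m" for u
  proof -
    have "Min (u ` S) \<in> u ` S" using fS neS by simp
    then show ?thesis using cubeD[OF that] SS by auto
  qed
  have u1: "u 1 \<in> {0..1}" if "u \<in> cube m" for u using cubeD[OF that] assms(1) by auto
  have Minle: "Min (u ` S) \<le> u i" if "i \<in> S" for u :: "nat \<Rightarrow> real" and i using fS that by simp
  have Mindiff: "Min (v ` S) \<le> Min (u ` S) + (\<Sum>i\<in>S. \<bar>v i - u i\<bar>)" for u v :: "nat \<Rightarrow> real"
  proof -
    have "Min (u ` S) \<in> u ` S" using fS neS by simp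
    then obtain j where j: "j \<in> S" "u j = Min (u ` S)" by auto
    have "Min (v ` S) \<le> v j" using Minle j by simp
    moreover have "\<bar>v j - u j\<bar> \<le> (\<Sum>i\<in>S. \<bar>v i - u i\<bar>)"
      using member_le_sum[of j S "\<lambda>i. \<bar>v i - u i\<bar>"] j fS by auto
    ultimately show ?thesis using j by linarith
  qed
  have surv: "survival m Qs u = survival 2 Q2 (pt2 (Max (u ` S)) (u 1))"
  proof -
    define M where "M = Max (u ` S)"
    have uS: "\<forall>i\<in>S. u i \<le> 1" using cubeD[OF u] SS by auto
    have cardS: "card S = m - 1" by (simp add: S_def)
    have keyMin: "Min ((yJ m J u) ` S) = Min (insert 1 (u ` (S - J)))" for J
    proof (rule antisym)
      obtain i0 where i0: "i0 \<in> S" using neS by auto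
      have yv: "yJ m J u i = (if i \<in> J then 1 else u i)" if "i \<in> S" for i
        using that SS by (auto simp: yJ_def)
      have "Min ((yJ m J u) ` S) \<le> x" if "x \<in> insert 1 (u ` (S - J))" for x
      proof -
        from that consider "x = 1" | j where "j \<in> S - J" "x = u j" by auto
        then show ?thesis
        proof cases
          case 1
          have "Min ((yJ m J u) ` S) \<le> yJ m J u i0" using fS i0 by simp
          then show ?thesis using 1 yv[OF i0] uS i0 by (auto split: if_splits)
        next
          case 2
          have "Min ((yJ m J u) ` S) \<le> yJ m J u j" using fS 2 by simp
          then show ?thesis using 2 yv[of j] by auto
        qed
      qed
      then show "Min ((yJ m J u) ` S) \<le> Min (insert 1 (u ` (S - J)))"
        using fS by (simp add: Min_ge_iff del: Min_insert)
      have "Min (insert 1 (u ` (S - J))) \<le> yJ m J u i" if "i \<in> S" for i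
        using yv[OF that] that fS by (auto simp del: Min_insert intro: Min_le)
      then show "Min (insert 1 (u ` (S - J))) \<le> Min ((yJ m J u) ` S)"
        using fS neS by (simp add: Min_ge_iff)
    qed
    have y1: "yJ m J u 1 = (if 1 \<in> J then 1 else u 1)" for J
      using assms(1) by (simp add: yJ_def)
    define h1 where "h1 T = (-1) ^ card T * Q2 (pt2 (Min (insert 1 (u ` T))) 1)" for T
    define h2 where "h2 T = (-1) ^ card T * Q2 (pt2 (Min (insert 1 (u ` T))) (u 1))" for T
    define t where "t J = (-1) ^ (m - card J) * Qs (yJ m J u)" for J
    have dis: "Pow S \<inter> insert 1 ` Pow S = {}" using n1S by auto
    have inj: "inj_on (insert 1) (Pow S)"
    proof (rule inj_onI)
      fix x y assume xy: "x \<in> Pow S" "y \<in> Pow S" "insert 1 x = insert 1 y"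
      then have "insert 1 x - {1} = insert 1 y - {1}" by simp
      then show "x = y" using xy n1S by auto
    qed
    have A: "survival m Qs u = (\<Sum>K\<in>Pow S. t K) + (\<Sum>K\<in>insert 1 ` Pow S. t K)"
      unfolding survival_def t_def[symmetric] S1 Pow_insert using dis fS by (simp add: sum.union_disjoint)
    have B: "(\<Sum>K\<in>insert 1 ` Pow S. t K) = (\<Sum>K\<in>Pow S. t (insert 1 K))"
      using inj by (simp add: sum.reindex)
    have C: "(\<Sum>K\<in>Pow S. t K) = - (\<Sum>K\<in>Pow S. h2 (S - K))"
      unfolding sum_negf[symmetric]
    proof (rule sum.cong)
      fix K assume K: "K \<in> Pow S"
      have fK: "finite K" using K fS finite_subset by blast
      have "card K \<le> card S" using K fS by (simp add: card_mono)
      then have "m - card K = Suc (card (S - K))"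
        using K fK fS cardS assms(1) by (simp add: card_Diff_subset)
      moreover have "1 \<notin> K" using K n1S by auto
      ultimately show "t K = - h2 (S - K)"
        unfolding t_def h2_def QsS keyMin y1 by simp
    qed simp
    have D: "(\<Sum>K\<in>Pow S. t (insert 1 K)) = (\<Sum>K\<in>Pow S. h1 (S - K))"
    proof (rule sum.cong)
      fix K assume K: "K \<in> Pow S"
      have fK: "finite K" using K fS finite_subset by blast
      have "1 \<notin> K" using K n1S by auto
      then have ci: "card (insert 1 K) = Suc (card K)" using fK by simp
      have "card K \<le> card S" using K fS by (simp add: card_mono)
      then have "m - card (insert 1 K) = card (S - K)"
        using ci K fK fS cardS assms(1) by (simp add: card_Diff_subset)
      moreover have "S - insert 1 K = S - K" using n1S by auto
      ultimately show "t (insert 1 K) = h1 (S - K)"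
        unfolding t_def h1_def QsS keyMin y1 by simp
    qed simp
    have compl: "(\<Sum>K\<in>Pow S. F (S - K)) = (\<Sum>T\<in>Pow S. F T)" for F :: "nat set \<Rightarrow> real"
      by (rule sum.reindex_bij_witness[of _ "\<lambda>K. S - K" "\<lambda>K. S - K"]) auto
    have c1: "(\<Sum>T\<in>Pow S. h1 T) = Q2 (pt2 1 1) - Q2 (pt2 M 1)"
      using comb[OF fS uS, of "\<lambda>x. Q2 (pt2 x 1)"] neS by (simp add: h1_def M_def)
    have c2: "(\<Sum>T\<in>Pow S. h2 T) = Q2 (pt2 1 (u 1)) - Q2 (pt2 M (u 1))"
      using comb[OF fS uS, of "\<lambda>x. Q2 (pt2 x (u 1))"] neS by (simp add: h2_def M_def)
    show ?thesis
      unfolding A B C D compl c1 c2 surv2 M_def[symmetric] by simp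
  qed
  show ?thesis using surv by (simp only: Qs_def S_def)
qed

theorem mainTheorem3:
  fixes m :: nat and Q2 :: "(nat \<Rightarrow> real) \<Rightarrow> real"
  assumes "m \<ge> 2" and "quasi_copula 2 Q2"
  shows "quasi_copula m (\<lambda>u. Q2 (pt2 (Min (u ` {2..m})) (u 1)))
       \<and> (\<forall>u\<in>cube m. survival m (\<lambda>u. Q2 (pt2 (Min (u ` {2..m})) (u 1))) u
                       = survival 2 Q2 (pt2 (Max (u ` {2..m})) (u 1)))"
proof (rule conjI)
  show "quasi_copula m (\<lambda>u. Q2 (pt2 (Min (u ` {2..m})) (u 1)))"
    by (rule qc_main[OF assms])
  show "\<forall>u\<in>cube m. survival m (\<lambda>u. Q2 (pt2 (Min (u ` {2..m})) (u 1))) u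
                       = survival 2 Q2 (pt2 (Max (u ` {2..m})) (u 1))"
    by (intro ballI surv_main[OF assms(1)])
qed

end
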